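(* Let $\rho:A\to C$ and $\sigma:B\to C$ be ring homomorphisms and let $D:=\rho\times_C\sigma=\{(a,b)\in A\times B:\rho(a)=\sigma(b)\}$. Let $p_A:D\to A$ and $p_B:D\to B$ be the restrictions to $D$ of the projections of $A\times B$. The following are equivalent: (i) the set of all ideals of $D$ is totally ordered by inclusion; (ii) at least one of the following holds: (a) $\rho$ is injective and the set of all ideals of $p_B(D)$ is totally ordered by inclusion; (b) $\sigma$ is injective and the set of all ideals of $p_A(D)$ is totally ordered by inclusion.
   Context: All rings are commutative with identity. *)

theory Defs
  imports "HOL-Algebra.Algebra"
begin

definition fiber_product ::
  "('a, 'm) ring_scheme \<Rightarrow> ('b, 'n) ring_scheme \<Rightarrow> ('a \<Rightarrow> 'c) \<Rightarrow> ('b \<Rightarrow> 'c) \<Rightarrow> ('a \<times> 'b) ring"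
  where "fiber_product A B \<rho> \<sigma> =
    (RDirProd A B) \<lparr> carrier := {(a, b). a \<in> carrier A \<and> b \<in> carrier B \<and> \<rho> a = \<sigma> b} \<rparr>"

definition ideals_chain :: "('a, 'm) ring_scheme \<Rightarrow> bool"
  where "ideals_chain R \<longleftrightarrow> (\<forall>I J. ideal I R \<longrightarrow> ideal J R \<longrightarrow> I \<subseteq> J \<or> J \<subseteq> I)"

end

theory Submission
  imports Defs
begin

lemma RDP_ops:
  "x \<otimes>\<^bsub>RDirProd A B\<^esub> y = (fst x \<otimes>\<^bsub>A\<^esub> fst y, snd x \<otimes>\<^bsub>B\<^esub> snd y)"
  "x \<oplus>\<^bsub>RDirProd A B\<^esub> y = (fst x \<oplus>\<^bsub>A\<^esub> fst y, snd x \<oplus>\<^bsub>B\<^esub> snd y)"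
  "\<one>\<^bsub>RDirProd A B\<^esub> = (\<one>\<^bsub>A\<^esub>, \<one>\<^bsub>B\<^esub>)"
  "\<zero>\<^bsub>RDirProd A B\<^esub> = (\<zero>\<^bsub>A\<^esub>, \<zero>\<^bsub>B\<^esub>)"
  by (auto simp: RDirProd_def DirProd_def monoid.defs case_prod_beta)

lemma RDP_neg:
  assumes "ring A" "ring B" "a \<in> carrier A" "b \<in> carrier B"
  shows "a_inv (RDirProd A B) (a, b) = (\<ominus>\<^bsub>A\<^esub> a, \<ominus>\<^bsub>B\<^esub> b)"
proof -
  interpret P: ring "RDirProd A B" using RDirProd_ring assms by blast
  show ?thesis
    apply (rule P.minus_equality)
    using assms by (auto simp: RDP_ops RDirProd_carrier ring.ring_simprules)
qed

lemma chain_transfer: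
  assumes "ring R" "ring S" "h \<in> ring_hom R S" "h ` carrier R = carrier S" "ideals_chain R"
  shows "ideals_chain S"
  unfolding ideals_chain_def
proof (intro allI impI)
  fix I J assume I: "ideal I S" and J: "ideal J S"
  have hr: "ring_hom_ring R S h" using assms ring_hom_ringI2 by blast
  have I': "ideal {r \<in> carrier R. h r \<in> I} R" using ring_hom_ring.ideal_vimage[OF hr I] by blast
  have J': "ideal {r \<in> carrier R. h r \<in> J} R" using ring_hom_ring.ideal_vimage[OF hr J] by blast
  have Ic: "I \<subseteq> carrier S" using I by (simp add: additive_subgroup.a_subset ideal.axioms(1))
  have Jc: "J \<subseteq> carrier S" using J by (simp add: additive_subgroup.a_subset ideal.axioms(1))
  define XX where "XX = {r \<in> carrier R. h r \<in> I}"
  define YY where "YY = {r \<in> carrier R. h r \<in> J}"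
  have eI: "h ` XX = I" using Ic assms(4) unfolding XX_def by (auto simp: image_iff)
  have eJ: "h ` YY = J" using Jc assms(4) unfolding YY_def by (auto simp: image_iff)
  from assms(5) I' J' have "XX \<subseteq> YY \<or> YY \<subseteq> XX" unfolding ideals_chain_def XX_def YY_def by blast
  then have "h ` XX \<subseteq> h ` YY \<or> h ` YY \<subseteq> h ` XX" using image_mono by blast
  then show "I \<subseteq> J \<or> J \<subseteq> I" unfolding eI eJ .
qed

lemma fp_facts:
  fixes A :: "('a, 'm) ring_scheme" and B :: "('b, 'n) ring_scheme" and C :: "('c, 'k) ring_scheme"
    and \<rho> :: "'a \<Rightarrow> 'c" and \<sigma> :: "'b \<Rightarrow> 'c"
  assumes "cring A" and "cring B" and "cring C"
    and "\<rho> \<in> ring_hom A C" and "\<sigma> \<in> ring_hom B C"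
  shows "ring (fiber_product A B \<rho> \<sigma>)"
    and "carrier (fiber_product A B \<rho> \<sigma>) = {(a, b). a \<in> carrier A \<and> b \<in> carrier B \<and> \<rho> a = \<sigma> b}"
    and "fst \<in> ring_hom (fiber_product A B \<rho> \<sigma>) A"
    and "snd \<in> ring_hom (fiber_product A B \<rho> \<sigma>) B"
    and "\<zero>\<^bsub>fiber_product A B \<rho> \<sigma>\<^esub> = (\<zero>\<^bsub>A\<^esub>, \<zero>\<^bsub>B\<^esub>)"
proof -
  interpret A: cring A by fact
  interpret B: cring B by fact
  interpret C: cring C by fact
  interpret P: ring "RDirProd A B" using RDirProd_ring A.ring_axioms B.ring_axioms by blast
  interpret hA: ring_hom_ring A C \<rho> using assms ring_hom_ringI2 A.ring_axioms C.ring_axioms by blast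
  interpret hB: ring_hom_ring B C \<sigma> using assms ring_hom_ringI2 B.ring_axioms C.ring_axioms by blast
  let ?X = "{(a, b). a \<in> carrier A \<and> b \<in> carrier B \<and> \<rho> a = \<sigma> b}"
  have "subring ?X (RDirProd A B)"
  proof (rule P.subringI)
    show "?X \<subseteq> carrier (RDirProd A B)" by (auto simp: RDirProd_carrier)
    show "\<one>\<^bsub>RDirProd A B\<^esub> \<in> ?X" by (simp add: RDP_ops)
    show "\<ominus>\<^bsub>RDirProd A B\<^esub> h \<in> ?X" if "h \<in> ?X" for h
      using that by (auto simp: RDP_neg[OF A.ring_axioms B.ring_axioms])
    show "h1 \<otimes>\<^bsub>RDirProd A B\<^esub> h2 \<in> ?X" if "h1 \<in> ?X" "h2 \<in> ?X" for h1 h2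
      using that by (auto simp: RDP_ops)
    show "h1 \<oplus>\<^bsub>RDirProd A B\<^esub> h2 \<in> ?X" if "h1 \<in> ?X" "h2 \<in> ?X" for h1 h2
      using that by (auto simp: RDP_ops)
  qed
  then show "ring (fiber_product A B \<rho> \<sigma>)"
    unfolding fiber_product_def using P.subring_is_ring by blast
  show "carrier (fiber_product A B \<rho> \<sigma>) = ?X" by (simp add: fiber_product_def)
  show "fst \<in> ring_hom (fiber_product A B \<rho> \<sigma>) A"
    by (rule ring_hom_memI) (auto simp: fiber_product_def RDP_ops)
  show "snd \<in> ring_hom (fiber_product A B \<rho> \<sigma>) B"
    by (rule ring_hom_memI) (auto simp: fiber_product_def RDP_ops)
  show "\<zero>\<^bsub>fiber_product A B \<rho> \<sigma>\<^esub> = (\<zero>\<^bsub>A\<^esub>, \<zero>\<^bsub>B\<^esub>)"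
    by (simp add: fiber_product_def RDP_ops)
qed


lemma half_B:
  fixes A :: "('a, 'm) ring_scheme" and B :: "('b, 'n) ring_scheme" and C :: "('c, 'k) ring_scheme"
    and \<rho> :: "'a \<Rightarrow> 'c" and \<sigma> :: "'b \<Rightarrow> 'c"
  assumes cr: "cring A" "cring B" "cring C"
    and hs: "\<rho> \<in> ring_hom A C" "\<sigma> \<in> ring_hom B C"
    and inj: "inj_on \<rho> (carrier A)"
  shows "ideals_chain (fiber_product A B \<rho> \<sigma>) \<longleftrightarrow>
         ideals_chain (B \<lparr> carrier := snd ` carrier (fiber_product A B \<rho> \<sigma>) \<rparr>)"
proof -
  let ?D = "fiber_product A B \<rho> \<sigma>"
  let ?P = "B \<lparr> carrier := snd ` carrier ?D \<rparr>"
  note fp = fp_facts[OF cr hs]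
  interpret B: cring B by fact
  have hr: "ring_hom_ring ?D B snd" using fp(1,4) B.ring_axioms ring_hom_ringI2 by blast
  have "subring (snd ` carrier ?D) B"
    using ring_hom_ring.img_is_subring[OF hr ring.carrier_is_subring[OF fp(1)]] .
  then have rP: "ring ?P" using B.subring_is_ring by blast
  have hP: "snd \<in> ring_hom ?D ?P" using fp(4) unfolding ring_hom_def by auto
  have injs: "inj_on snd (carrier ?D)"
    unfolding fp(2) inj_on_def using inj unfolding inj_on_def by auto
  have iso: "snd \<in> ring_iso ?D ?P"
    unfolding ring_iso_def using hP injs by (auto simp: bij_betw_def)
  have iso2: "inv_into (carrier ?D) snd \<in> ring_iso ?P ?D" using ring_iso_set_sym[OF fp(1) iso] .
  show ?thesis
  proof
    assume "ideals_chain ?D"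
    then show "ideals_chain ?P" using chain_transfer[OF fp(1) rP hP] by simp
  next
    assume c: "ideals_chain ?P"
    show "ideals_chain ?D"
      using chain_transfer[OF rP fp(1) iso2[unfolded ring_iso_def, THEN CollectD, THEN conjunct1]
          bij_betw_imp_surj_on[OF ring_iso_memE(5)[OF iso2]] c] .
  qed
qed

lemma half_A:
  fixes A :: "('a, 'm) ring_scheme" and B :: "('b, 'n) ring_scheme" and C :: "('c, 'k) ring_scheme"
    and \<rho> :: "'a \<Rightarrow> 'c" and \<sigma> :: "'b \<Rightarrow> 'c"
  assumes cr: "cring A" "cring B" "cring C"
    and hs: "\<rho> \<in> ring_hom A C" "\<sigma> \<in> ring_hom B C"
    and inj: "inj_on \<sigma> (carrier B)"
  shows "ideals_chain (fiber_product A B \<rho> \<sigma>) \<longleftrightarrow>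
         ideals_chain (A \<lparr> carrier := fst ` carrier (fiber_product A B \<rho> \<sigma>) \<rparr>)"
proof -
  let ?D = "fiber_product A B \<rho> \<sigma>"
  let ?P = "A \<lparr> carrier := fst ` carrier ?D \<rparr>"
  note fp = fp_facts[OF cr hs]
  interpret A: cring A by fact
  have hr: "ring_hom_ring ?D A fst" using fp(1,3) A.ring_axioms ring_hom_ringI2 by blast
  have "subring (fst ` carrier ?D) A"
    using ring_hom_ring.img_is_subring[OF hr ring.carrier_is_subring[OF fp(1)]] .
  then have rP: "ring ?P" using A.subring_is_ring by blast
  have hP: "fst \<in> ring_hom ?D ?P" using fp(3) unfolding ring_hom_def by auto
  have injs: "inj_on fst (carrier ?D)"
    unfolding fp(2) inj_on_def using inj unfolding inj_on_def by auto
  have iso: "fst \<in> ring_iso ?D ?P"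
    unfolding ring_iso_def using hP injs by (auto simp: bij_betw_def)
  have iso2: "inv_into (carrier ?D) fst \<in> ring_iso ?P ?D" using ring_iso_set_sym[OF fp(1) iso] .
  show ?thesis
  proof
    assume "ideals_chain ?D"
    then show "ideals_chain ?P" using chain_transfer[OF fp(1) rP hP] by simp
  next
    assume c: "ideals_chain ?P"
    show "ideals_chain ?D"
      using chain_transfer[OF rP fp(1) iso2[unfolded ring_iso_def, THEN CollectD, THEN conjunct1]
          bij_betw_imp_surj_on[OF ring_iso_memE(5)[OF iso2]] c] .
  qed
qed

lemma ker_part:
  fixes A :: "('a, 'm) ring_scheme" and B :: "('b, 'n) ring_scheme" and C :: "('c, 'k) ring_scheme"
    and \<rho> :: "'a \<Rightarrow> 'c" and \<sigma> :: "'b \<Rightarrow> 'c"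
  assumes cr: "cring A" "cring B" "cring C"
    and hs: "\<rho> \<in> ring_hom A C" "\<sigma> \<in> ring_hom B C"
    and ch: "ideals_chain (fiber_product A B \<rho> \<sigma>)"
  shows "inj_on \<rho> (carrier A) \<or> inj_on \<sigma> (carrier B)"
proof -
  let ?D = "fiber_product A B \<rho> \<sigma>"
  note fp = fp_facts[OF cr hs]
  interpret A: cring A by fact
  interpret B: cring B by fact
  interpret C: cring C by fact
  have hrA: "ring_hom_ring ?D A fst" using fp(1,3) A.ring_axioms ring_hom_ringI2 by blast
  have hrB: "ring_hom_ring ?D B snd" using fp(1,4) B.ring_axioms ring_hom_ringI2 by blast
  have rho: "ring_hom_ring A C \<rho>" using hs A.ring_axioms C.ring_axioms ring_hom_ringI2 by blast
  have sig: "ring_hom_ring B C \<sigma>" using hs B.ring_axioms C.ring_axioms ring_hom_ringI2 by blast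
  have r0: "\<rho> \<zero>\<^bsub>A\<^esub> = \<zero>\<^bsub>C\<^esub>" using ring_hom_zero[OF hs(1) A.ring_axioms C.ring_axioms] .
  have s0: "\<sigma> \<zero>\<^bsub>B\<^esub> = \<zero>\<^bsub>C\<^esub>" using ring_hom_zero[OF hs(2) B.ring_axioms C.ring_axioms] .
  have "a_kernel ?D B snd \<subseteq> a_kernel ?D A fst \<or> a_kernel ?D A fst \<subseteq> a_kernel ?D B snd"
    using ch ring_hom_ring.kernel_is_ideal[OF hrA] ring_hom_ring.kernel_is_ideal[OF hrB]
    unfolding ideals_chain_def by blast
  then show ?thesis
  proof
    assume sub: "a_kernel ?D B snd \<subseteq> a_kernel ?D A fst"
    have "a_kernel A C \<rho> = {\<zero>\<^bsub>A\<^esub>}"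
    proof
      show "a_kernel A C \<rho> \<subseteq> {\<zero>\<^bsub>A\<^esub>}"
      proof
        fix a assume "a \<in> a_kernel A C \<rho>"
        then have a: "a \<in> carrier A" "\<rho> a = \<zero>\<^bsub>C\<^esub>" by (auto simp: a_kernel_def')
        then have "(a, \<zero>\<^bsub>B\<^esub>) \<in> a_kernel ?D B snd" using s0 by (auto simp: a_kernel_def' fp(2))
        then have "(a, \<zero>\<^bsub>B\<^esub>) \<in> a_kernel ?D A fst" using sub by blast
        then show "a \<in> {\<zero>\<^bsub>A\<^esub>}" by (auto simp: a_kernel_def')
      qed
      show "{\<zero>\<^bsub>A\<^esub>} \<subseteq> a_kernel A C \<rho>" using r0 by (auto simp: a_kernel_def')
    qed
    then show ?thesis using ring_hom_ring.inj_iff_trivial_ker[OF rho] by blast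
  next
    assume sub: "a_kernel ?D A fst \<subseteq> a_kernel ?D B snd"
    have "a_kernel B C \<sigma> = {\<zero>\<^bsub>B\<^esub>}"
    proof
      show "a_kernel B C \<sigma> \<subseteq> {\<zero>\<^bsub>B\<^esub>}"
      proof
        fix b assume "b \<in> a_kernel B C \<sigma>"
        then have b: "b \<in> carrier B" "\<sigma> b = \<zero>\<^bsub>C\<^esub>" by (auto simp: a_kernel_def')
        then have "(\<zero>\<^bsub>A\<^esub>, b) \<in> a_kernel ?D A fst" using r0 by (auto simp: a_kernel_def' fp(2))
        then have "(\<zero>\<^bsub>A\<^esub>, b) \<in> a_kernel ?D B snd" using sub by blast
        then show "b \<in> {\<zero>\<^bsub>B\<^esub>}" by (auto simp: a_kernel_def')
      qed
      show "{\<zero>\<^bsub>B\<^esub>} \<subseteq> a_kernel B C \<sigma>" using s0 by (auto simp: a_kernel_def')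
    qed
    then show ?thesis using ring_hom_ring.inj_iff_trivial_ker[OF sig] by blast
  qed
qed

theorem proposition4p9:
  fixes A :: "('a, 'm) ring_scheme" and B :: "('b, 'n) ring_scheme" and C :: "('c, 'k) ring_scheme"
    and \<rho> :: "'a \<Rightarrow> 'c" and \<sigma> :: "'b \<Rightarrow> 'c"
  assumes "cring A" and "cring B" and "cring C"
    and "\<rho> \<in> ring_hom A C" and "\<sigma> \<in> ring_hom B C"
  shows "ideals_chain (fiber_product A B \<rho> \<sigma>) \<longleftrightarrow>
     ((inj_on \<rho> (carrier A) \<and>
        ideals_chain (B \<lparr> carrier := snd ` carrier (fiber_product A B \<rho> \<sigma>) \<rparr>))
    \<or> (inj_on \<sigma> (carrier B) \<and>
        ideals_chain (A \<lparr> carrier := fst ` carrier (fiber_product A B \<rho> \<sigma>) \<rparr>)))"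
  using ker_part[OF assms] half_A[OF assms] half_B[OF assms] by blast

end
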